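(* Let $n$ be a positive odd integer. Then, modulo $(1-aq^n)(a-q^n)$, $$ \sum_{k=0}^{n-1}\frac{(aq;q^2)_k\,(q/a;q^2)_k}{(q^2;q^2)_k^2}\, x^k \equiv \sum_{k=0}^{(n-1)/2}{(n-1)/2\brack k}_{q^2}^2 q^{k^2-nk} (-x)^k\, (x;q^2)_{(n-1)/2-k}. $$
   Context: $a,q,x$ are indeterminates. The $q$-shifted factorial is $(y;q)_0=1$ and $(y;q)_m=(1-y)(1-yq)\cdots(1-yq^{m-1})$ for $m\geqslant1$. The $q$-binomial coefficient is ${N\brack k}_q=\frac{(q;q)_N}{(q;q)_k(q;q)_{N-k}}$ for $0\leqslant k\leqslant N$ and $0$ otherwise; ${N\brack k}_{q^2}$ is this with $q$ replaced by $q^2$. For rational functions $A,B$ and a polynomial $P$, $A\equiv B\pmod P$ means $A-B=P\cdot C/D$ for polynomials $C,D$ with $D$ coprime to $P$. *)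

theory Defs
  imports "HOL-Computational_Algebra.Polynomial" "HOL-Computational_Algebra.Fraction_Field"
begin

text \<open>Polynomials in the three indeterminates a, q, x over the rationals are modelled as
  nested univariate polynomials: the ring rat poly poly poly, where the innermost variable
  is a, the middle one is q and the outermost one is x.\<close>

type_synonym mpoly3 = "rat poly poly poly"
type_synonym rfun3 = "mpoly3 fract"

definition var_a :: mpoly3 where "var_a = [:[:[:0, 1:]:]:]"
definition var_q :: mpoly3 where "var_q = [:[:0, 1:]:]"
definition var_x :: mpoly3 where "var_x = [:0, 1:]"

definition emb :: "mpoly3 \<Rightarrow> rfun3" where "emb p = Fract p 1"

definition A :: rfun3 where "A = emb var_a"
definition Q :: rfun3 where "Q = emb var_q"
definition X :: rfun3 where "X = emb var_x"

definition qpoch :: "'a::comm_ring_1 \<Rightarrow> 'a \<Rightarrow> nat \<Rightarrow> 'a" where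
  "qpoch y q m = (\<Prod>i<m. 1 - y * q ^ i)"

definition qbinom :: "'a::field \<Rightarrow> nat \<Rightarrow> nat \<Rightarrow> 'a" where
  "qbinom q N k = (if k \<le> N then qpoch q q N / (qpoch q q k * qpoch q q (N - k)) else 0)"

definition rcong :: "rfun3 \<Rightarrow> rfun3 \<Rightarrow> mpoly3 \<Rightarrow> bool" where
  "rcong F G P \<longleftrightarrow> (\<exists>C D. coprime D P \<and> F - G = emb P * emb C / emb D)"

end

theory Submission
  imports Defs "HOL-Computational_Algebra.Polynomial_Factorial" "HOL-Computational_Algebra.Field_as_Ring"
begin


lemma qpoch_Suc: "qpoch y q (Suc n) = qpoch y q n * (1 - y * q ^ n)"
  by (simp add: qpoch_def)

lemma qpoch_0[simp]: "qpoch y q 0 = 1" by (simp add: qpoch_def)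

lemma qfact_nz:
  fixes p :: "'a::field"
  assumes hp: "\<And>i. 0 < i \<Longrightarrow> p ^ i \<noteq> 1"
  shows "qpoch p p j \<noteq> 0"
proof -
  have h: "p * p ^ i \<noteq> 1" for i using hp[of "Suc i"] by auto
  show ?thesis unfolding qpoch_def by (subst prod_zero_iff) (use h in auto)
qed

lemma qbinom_0: 
  fixes p :: "'a::field"
  assumes hp: "\<And>i. 0 < i \<Longrightarrow> p ^ i \<noteq> 1"
  shows "qbinom p j 0 = 1"
proof -
  have "qpoch p p j \<noteq> 0" using qfact_nz[OF hp] .
  then show ?thesis by (simp add: qbinom_def)
qed

lemma qbinom_gt[simp]: "j < i \<Longrightarrow> qbinom p j i = 0"
  by (simp add: qbinom_def)

lemma qbinom_diag: 
  fixes p :: "'a::field"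
  assumes hp: "\<And>i. 0 < i \<Longrightarrow> p ^ i \<noteq> 1"
  shows "qbinom p j j = 1"
proof -
  have "qpoch p p j \<noteq> 0" using qfact_nz[OF hp] .
  then show ?thesis by (simp add: qbinom_def)
qed

lemma pascal_aux:
  fixes x y z P R :: "'a::field"
  assumes "y \<noteq> 0" "z \<noteq> 0" "1 - R \<noteq> 0" "1 - P \<noteq> 0"
  shows "x * (1 - P * R) / (y * (1 - R) * (z * (1 - P))) = x / (y * (1 - R) * z) + P * (x / (y * (z * (1 - P))))"
proof -
  define a where "a = 1 - R"
  define b where "b = 1 - P"
  have e: "1 - P * R = b + P * a" "1 - R = a" "1 - P = b" unfolding a_def b_def by (simp_all add: algebra_simps)
  have "a \<noteq> 0" "b \<noteq> 0" using assms a_def b_def by auto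
  then show ?thesis unfolding e using assms(1,2) by (simp add: field_simps)
qed

lemma pascal:
  fixes p :: "'a::field"
  assumes hp: "\<And>i. 0 < i \<Longrightarrow> p ^ i \<noteq> 1" and i: "0 < i"
  shows "qbinom p (Suc j) i = qbinom p j i + p ^ (Suc j - i) * qbinom p j (i - 1)"
proof (cases "i \<le> j")
  case True
  obtain i' where i': "i = Suc i'" using i by (cases i) auto
  define r where "r = j - i"
  have j: "j = i' + 1 + r" using True i' r_def by auto
  have nz: "\<And>k. qpoch p p k \<noteq> 0" using qfact_nz[OF hp] .
  have a1: "1 - p ^ i \<noteq> 0" using hp i by auto
  have a2: "1 - p ^ Suc r \<noteq> 0" using hp[of "Suc r"] by auto
  have e1: "qpoch p p (Suc j) = qpoch p p j * (1 - p ^ Suc r * p ^ i)"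
    by (simp add: qpoch_Suc j i' power_add[symmetric] algebra_simps)
  have e2: "qpoch p p i = qpoch p p i' * (1 - p ^ i)"
    by (simp add: qpoch_Suc i')
  have e3: "qpoch p p (Suc r) = qpoch p p r * (1 - p ^ Suc r)"
    by (simp add: qpoch_Suc)
  have s1: "Suc j - i = Suc r" "j - i = r" "j - i' = Suc r" using j i' by auto
  have b1: "qbinom p (Suc j) i = qpoch p p (Suc j) / (qpoch p p i * qpoch p p (Suc r))"
    using True by (simp add: qbinom_def s1)
  have b2: "qbinom p j i = qpoch p p j / (qpoch p p i * qpoch p p r)"
    using True by (simp add: qbinom_def s1)
  have b3: "qbinom p j (i - 1) = qpoch p p j / (qpoch p p i' * qpoch p p (Suc r))"
    using True i' by (simp add: qbinom_def s1)
  have X: "p ^ Suc r * p ^ i = p ^ Suc r * p ^ i" ..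
  show ?thesis
    unfolding b1 b2 b3 s1 e1 e3 e2
    by (rule pascal_aux[OF nz[of i'] nz[of r] a1 a2])
next
  case False
  then have "i = Suc j \<or> i > Suc j" by auto
  then show ?thesis
  proof
    assume "i = Suc j"
    then show ?thesis using qbinom_diag[OF hp] by simp
  next
    assume "i > Suc j" then show ?thesis by simp
  qed
qed




definition qp :: "'a::field \<Rightarrow> 'a \<Rightarrow> nat \<Rightarrow> 'a poly" where
  "qp p c j = (\<Prod>i<j. [:1, -(c * p ^ i):])"

lemma qp_Suc: "qp p c (Suc j) = qp p c j * [:1, -(c * p ^ j):]"
  by (simp add: qp_def)

lemma choose2_Suc: "Suc i choose 2 = i + (i choose 2)"
  by (simp add: numeral_2_eq_2)

lemma coeff_mult_lin: "coeff ((f::'a::comm_ring_1 poly) * [:1, b:]) (Suc i) = coeff f (Suc i) + b * coeff f i"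
proof -
  have "f * [:1, b:] = f + pCons 0 (smult b f)"
    by (simp add: mult.commute[of f] mult_pCons_left smult_1_left)
  then show ?thesis by simp
qed

lemma coeff_mult_lin0: "coeff ((f::'a::comm_ring_1 poly) * [:1, b:]) 0 = coeff f 0"
proof -
  have "f * [:1, b:] = f + pCons 0 (smult b f)"
    by (simp add: mult.commute[of f] mult_pCons_left smult_1_left)
  then show ?thesis by simp
qed

lemma coeff_qp:
  fixes p :: "'a::field"
  assumes hp: "\<And>i. 0 < i \<Longrightarrow> p ^ i \<noteq> 1"
  shows "coeff (qp p c j) i = qbinom p j i * (-1) ^ i * p ^ (i choose 2) * c ^ i"
proof (induction j arbitrary: i)
  case 0
  show ?case by (cases i) (auto simp: qp_def qbinom_0[OF hp] numeral_2_eq_2)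
next
  case (Suc j)
  show ?case
  proof (cases i)
    case 0
    then show ?thesis by (simp add: qp_Suc coeff_mult_lin0 Suc qbinom_0[OF hp])
  next
    case (Suc i')
    have P: "qbinom p (Suc j) (Suc i') = qbinom p j (Suc i') + p ^ (j - i') * qbinom p j i'"
      using pascal[OF hp, of "Suc i'" j] by simp
    have key: "p ^ (j - i') * qbinom p j i' * p ^ (i' + (i' choose 2))
        = p ^ j * qbinom p j i' * p ^ (i' choose 2)"
    proof (cases "i' \<le> j")
      case True
      then have "p ^ (j - i') * p ^ (i' + (i' choose 2)) = p ^ j * p ^ (i' choose 2)"
        by (simp add: power_add[symmetric])
      then show ?thesis by (simp add: algebra_simps)
    next
      case False then show ?thesis by simp
    qed
    show ?thesis
      unfolding Suc qp_Suc coeff_mult_lin Suc.IH P choose2_Suc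
      using key by (simp add: algebra_simps)
  qed
qed

lemma poly_qp: "poly (qp p c j) x = qpoch (c * x) p j"
  by (simp add: qp_def qpoch_def poly_prod algebra_simps)

lemma qp_add: "qp p c (m + N) = qp p c m * qp p (c * p ^ m) N"
  by (induction N) (simp_all add: qp_def power_add algebra_simps)

lemma vandermonde:
  fixes p :: "'a::field"
  assumes hp: "\<And>i. 0 < i \<Longrightarrow> p ^ i \<noteq> 1"
  shows "(\<Sum>k\<le>N. qbinom p m k * (-1) ^ k * p ^ (k choose 2) *
      (qbinom p N (N - k) * (-1) ^ (N - k) * p ^ ((N - k) choose 2) * (p ^ m) ^ (N - k)))
     = qbinom p (m + N) N * (-1) ^ N * p ^ (N choose 2)"
proof -
  have "coeff (qp p 1 (m + N)) N = coeff (qp p 1 m * qp p (1 * p ^ m) N) N"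
    by (simp add: qp_add)
  then show ?thesis
    by (simp add: coeff_mult coeff_qp[OF hp])
qed




lemma lemA: "qpoch (p ^ Suc m) p k * qpoch p p m = qpoch p p (m + k)"
  by (induction k) (simp_all add: qpoch_Suc power_add algebra_simps)

lemma lemB:
  fixes p u :: "'a::field"
  assumes up: "u * p = 1"
  shows "k \<le> m \<Longrightarrow> qpoch (u ^ m) p k * qpoch p p (m - k)
     = (-1) ^ k * p ^ (k choose 2) * u ^ (m * k) * qpoch p p m"
proof (induction k)
  case 0 then show ?case by (simp add: numeral_2_eq_2)
next
  case (Suc k)
  obtain j where j: "m - k = Suc j" "m - Suc k = j" using Suc.prems by (cases "m - k") auto
  have mj: "m = Suc j + k" using j Suc.prems by auto
  have IH: "qpoch (u ^ m) p k * qpoch p p (Suc j) = (-1) ^ k * p ^ (k choose 2) * u ^ (m * k) * qpoch p p m"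
    using Suc.IH Suc.prems j by simp
  have pu: "(u * p) ^ k = 1" "(u * p) ^ Suc j = 1" using up by simp_all
  have e1: "u ^ m * p ^ k = u ^ Suc j"
    using pu(1) unfolding mj by (simp add: power_add power_mult_distrib algebra_simps)
  have e2: "qpoch p p (Suc j) = qpoch p p j * (1 - p ^ Suc j)" by (simp add: qpoch_Suc)
  have e3: "1 - u ^ Suc j = - (u ^ Suc j) * (1 - p ^ Suc j)"
    using pu(2) by (simp add: power_mult_distrib algebra_simps)
  have e4: "u ^ (m * Suc k) = u ^ (m * k) * u ^ Suc j * u ^ k"
    unfolding mj by (simp add: power_add algebra_simps)
  have "qpoch (u ^ m) p (Suc k) * qpoch p p (m - Suc k)
      = qpoch (u ^ m) p k * (1 - u ^ Suc j) * qpoch p p j"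
    by (simp add: qpoch_Suc e1 j)
  also have "\<dots> = - (u ^ Suc j) * (qpoch (u ^ m) p k * qpoch p p (Suc j))"
    unfolding e3 e2 by algebra
  also have "\<dots> = - (u ^ Suc j) * ((-1) ^ k * p ^ (k choose 2) * u ^ (m * k) * qpoch p p m)"
    by (simp add: IH)
  also have "\<dots> = (-1) ^ Suc k * p ^ (Suc k choose 2) * u ^ (m * Suc k) * qpoch p p m"
  proof -
    have e5: "u ^ (m * Suc k) = u ^ (m * k) * u ^ m" by (simp add: power_add[symmetric] algebra_simps)
    show ?thesis apply (unfold e1[symmetric] choose2_Suc e5 power_add) apply (unfold power_Suc) by algebra
  qed
  finally show ?case .
qed

lemma lemC:
  fixes p u :: "'a::field"
  assumes up: "u * p = 1" and mk: "m < k"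
  shows "qpoch (u ^ m) p k = 0"
proof -
  have "1 - u ^ m * p ^ m = 0" using up by (simp add: power_mult_distrib[symmetric])
  then show ?thesis unfolding qpoch_def using mk by (subst prod_zero_iff) auto
qed

lemma lemW:
  fixes q :: "'a::field"
  assumes q0: "q \<noteq> 0" and nm: "n = 2 * m + 1"
  shows "q powi (int k ^ 2 - int n * int k) = (q ^ 2) ^ (k choose 2) * inverse (q ^ 2) ^ (m * k)"
proof -
  have c2: "k * (k - 1) = 2 * (k choose 2)"
  proof (induction k)
    case (Suc k)
    have "k * k = k * (k - 1) + k" by (cases k) auto
    then show ?case using Suc by (simp add: choose2_Suc)
  qed simp
  have "int k ^ 2 - int n * int k = int (k * (k - 1)) - int (2 * m * k)"
    unfolding nm by (cases k) (simp_all add: power2_eq_square algebra_simps)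
  have g: "q powi (int a - int b) = q ^ a / q ^ b" for a b
    using q0 by (subst power_int_diff) simp_all
  from this[of "k * (k - 1)" "2 * m * k"]
  have "q powi (int k ^ 2 - int n * int k) = q ^ (k * (k - 1)) / q ^ (2 * m * k)"
    unfolding \<open>int k ^ 2 - int n * int k = int (k * (k - 1)) - int (2 * m * k)\<close> .
  also have "\<dots> = (q ^ 2) ^ (k choose 2) * inverse (q ^ 2) ^ (m * k)"
    unfolding c2 by (simp add: power_mult power_inverse divide_inverse mult.assoc)
  finally show ?thesis .
qed

lemma lemD:
  fixes p :: "'a::field"
  assumes hp: "\<And>i. 0 < i \<Longrightarrow> p ^ i \<noteq> 1" and kN: "k \<le> N" and Nm: "N \<le> m"
  shows "qbinom p m k * qbinom p (m - k) (N - k) = qbinom p m N * qbinom p N (N - k)"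
proof -
  have nz: "\<And>j. qpoch p p j \<noteq> 0" using qfact_nz[OF hp] .
  have a: "m - k - (N - k) = m - N" "N - (N - k) = k" using kN Nm by auto
  show ?thesis using kN Nm nz[of m] nz[of k] nz[of "m-k"] nz[of "N-k"] nz[of "m-N"] nz[of N]
    by (simp add: qbinom_def a field_simps)
qed

lemma lemE:
  fixes p u :: "'a::field"
  assumes up: "u * p = 1" and kN: "k \<le> N"
  shows "u ^ (m * k) = u ^ (m * N) * (p ^ m) ^ (N - k)"
proof -
  have N: "m * N = m * k + m * (N - k)" using kN by (simp add: algebra_simps)
  have "u ^ (m * (N - k)) * (p ^ m) ^ (N - k) = 1"
    using up by (simp add: power_mult[symmetric] power_mult_distrib[symmetric])
  then show ?thesis unfolding N power_add by (simp add: mult.assoc)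
qed




lemma lemG:
  fixes p u :: "'a::field"
  assumes hp: "\<And>i. 0 < i \<Longrightarrow> p ^ i \<noteq> 1" and Nm: "N \<le> m"
  shows "qbinom p m N * u ^ (m * N) * (qbinom p (m + N) N * (-1) ^ N * p ^ (N choose 2))
    = qpoch p p (m + N) / qpoch p p m * ((-1) ^ N * p ^ (N choose 2) * u ^ (m * N) * qpoch p p m / qpoch p p (m - N)) / (qpoch p p N)^2"
proof -
  have nz: "\<And>j. qpoch p p j \<noteq> 0" using qfact_nz[OF hp] .
  show ?thesis using Nm nz[of m] nz[of N] nz[of "m-N"] nz[of "m+N"]
    by (simp add: qbinom_def field_simps power2_eq_square)
qed

lemma field_id:
  fixes q x :: "'a::field"
  assumes q0: "q \<noteq> 0" and hq: "\<And>i. 0 < i \<Longrightarrow> (q ^ 2) ^ i \<noteq> 1" and nm: "n = 2 * m + 1"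
  shows "(\<Sum>k<n. qpoch (q ^ n * q) (q ^ 2) k * qpoch (q / q ^ n) (q ^ 2) k
              / (qpoch (q ^ 2) (q ^ 2) k) ^ 2 * x ^ k)
       = (\<Sum>k\<le>m. (qbinom (q ^ 2) m k) ^ 2
              * q powi (int k ^ 2 - int n * int k) * (- x) ^ k
              * qpoch x (q ^ 2) (m - k))"
proof -
  define p where "p = q ^ 2"
  define u where "u = inverse p"
  have p0: "p \<noteq> 0" using q0 p_def by simp
  have up: "u * p = 1" using p0 u_def by simp
  have hp: "\<And>i. 0 < i \<Longrightarrow> p ^ i \<noteq> 1" using hq p_def by simp
  have nz: "\<And>j. qpoch p p j \<noteq> 0" using qfact_nz[OF hp] .
  have s1: "q ^ n * q = p ^ Suc m" unfolding p_def nm by (simp add: power_mult[symmetric] power_add[symmetric])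
  have s2: "q / q ^ n = u ^ m"
  proof -
    have "q ^ n = q * p ^ m" unfolding p_def nm by (simp add: power_mult[symmetric])
    then show ?thesis using q0 unfolding u_def by (simp add: power_inverse field_simps)
  qed
  define L where "L k = qpoch p p (m + k) / qpoch p p m * ((-1) ^ k * p ^ (k choose 2) * u ^ (m * k) * qpoch p p m / qpoch p p (m - k)) / (qpoch p p k)^2" for k
  define c where "c k = (qbinom p m k) ^ 2 * (p ^ (k choose 2) * u ^ (m * k)) * (-1) ^ k" for k
  have LHS: "(\<Sum>k<n. qpoch (q ^ n * q) (q ^ 2) k * qpoch (q / q ^ n) (q ^ 2) k
              / (qpoch (q ^ 2) (q ^ 2) k) ^ 2 * x ^ k) = (\<Sum>k\<le>m. L k * x ^ k)"
  proof -
    have "(\<Sum>k<n. qpoch (q ^ n * q) (q ^ 2) k * qpoch (q / q ^ n) (q ^ 2) k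
              / (qpoch (q ^ 2) (q ^ 2) k) ^ 2 * x ^ k)
        = (\<Sum>k<n. qpoch (p ^ Suc m) p k * qpoch (u ^ m) p k / (qpoch p p k) ^ 2 * x ^ k)"
      unfolding s1 s2 p_def ..
    also have "\<dots> = (\<Sum>k\<le>m. qpoch (p ^ Suc m) p k * qpoch (u ^ m) p k / (qpoch p p k) ^ 2 * x ^ k)"
      by (rule sum.mono_neutral_right) (auto simp: nm lemC[OF up])
    also have "\<dots> = (\<Sum>k\<le>m. L k * x ^ k)"
    proof (rule sum.cong[OF refl])
      fix k assume k: "k \<in> {..m}"
      have a: "qpoch (p ^ Suc m) p k = qpoch p p (m + k) / qpoch p p m"
        using lemA[of p m k] nz[of m] by (simp add: field_simps)
      have b: "qpoch (u ^ m) p k = (-1) ^ k * p ^ (k choose 2) * u ^ (m * k) * qpoch p p m / qpoch p p (m - k)"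
        using lemB[OF up, of k m] k nz[of "m-k"] by (simp add: field_simps)
      show "qpoch (p ^ Suc m) p k * qpoch (u ^ m) p k / (qpoch p p k) ^ 2 * x ^ k = L k * x ^ k"
        unfolding a b L_def by simp
    qed
    finally show ?thesis .
  qed
  have RHS: "(\<Sum>k\<le>m. (qbinom (q ^ 2) m k) ^ 2
              * q powi (int k ^ 2 - int n * int k) * (- x) ^ k
              * qpoch x (q ^ 2) (m - k)) = (\<Sum>k\<le>m. c k * (x ^ k * qpoch (1 * x) p (m - k)))"
  proof (rule sum.cong[OF refl])
    fix k
    show "(qbinom (q ^ 2) m k) ^ 2 * q powi (int k ^ 2 - int n * int k) * (- x) ^ k
              * qpoch x (q ^ 2) (m - k) = c k * (x ^ k * qpoch (1 * x) p (m - k))"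
      unfolding lemW[OF q0 nm] c_def u_def p_def
      by (simp add: power_minus[of x] algebra_simps)
  qed
  define LP where "LP = (\<Sum>k\<le>m. monom (L k) k)"
  define RP where "RP = (\<Sum>k\<le>m. smult (c k) (monom 1 k * qp p 1 (m - k)))"
  have pL: "poly LP x = (\<Sum>k\<le>m. L k * x ^ k)" unfolding LP_def by (simp add: poly_sum poly_monom)
  have pR: "poly RP x = (\<Sum>k\<le>m. c k * (x ^ k * qpoch (1 * x) p (m - k)))"
    unfolding RP_def by (simp add: poly_sum poly_monom poly_qp)
  have eq: "LP = RP"
  proof (rule poly_eqI)
    fix N
    have cL: "coeff LP N = (if N \<le> m then L N else 0)"
      unfolding LP_def coeff_sum by (simp add: sum.delta)
    have cR: "coeff RP N = (\<Sum>k\<le>m. if k \<le> N then c k * (qbinom p (m - k) (N - k) * (-1) ^ (N - k) * p ^ ((N - k) choose 2)) else 0)"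
      unfolding RP_def coeff_sum by (intro sum.cong refl) (auto simp: coeff_monom_mult coeff_qp[OF hp])
    show "coeff LP N = coeff RP N"
    proof (cases "N \<le> m")
      case False
      have "coeff RP N = 0" unfolding cR
        by (rule sum.neutral) (use False in auto)
      then show ?thesis using cL False by simp
    next
      case True
      have "coeff RP N = (\<Sum>k\<le>N. c k * (qbinom p (m - k) (N - k) * (-1) ^ (N - k) * p ^ ((N - k) choose 2)))"
        unfolding cR using True
        by (subst sum.mono_neutral_right[of "{..m}" "{..N}"]) auto
      also have "\<dots> = (\<Sum>k\<le>N. qbinom p m N * u ^ (m * N) * (qbinom p m k * (-1) ^ k * p ^ (k choose 2) *
      (qbinom p N (N - k) * (-1) ^ (N - k) * p ^ ((N - k) choose 2) * (p ^ m) ^ (N - k))))"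
      proof (rule sum.cong[OF refl])
        fix k assume k: "k \<in> {..N}"
        have D: "qbinom p m k * qbinom p (m - k) (N - k) = qbinom p m N * qbinom p N (N - k)"
          using lemD[OF hp, of k N m] k True by simp
        have E: "u ^ (m * k) = u ^ (m * N) * (p ^ m) ^ (N - k)" using lemE[OF up, of k N m] k by simp
        have S: "(-1::'a) ^ k * (-1) ^ (N - k) = (-1) ^ k * (-1) ^ (N - k)" ..
        show "c k * (qbinom p (m - k) (N - k) * (-1) ^ (N - k) * p ^ ((N - k) choose 2)) =
          qbinom p m N * u ^ (m * N) * (qbinom p m k * (-1) ^ k * p ^ (k choose 2) *
          (qbinom p N (N - k) * (-1) ^ (N - k) * p ^ ((N - k) choose 2) * (p ^ m) ^ (N - k)))"
        proof -
          have "c k * (qbinom p (m - k) (N - k) * (-1) ^ (N - k) * p ^ ((N - k) choose 2))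
             = qbinom p m k * (qbinom p m k * qbinom p (m - k) (N - k)) * (p ^ (k choose 2) * u ^ (m * k)) * (-1) ^ k
               * ((-1) ^ (N - k) * p ^ ((N - k) choose 2))"
            unfolding c_def by (simp add: power2_eq_square algebra_simps)
          also have "\<dots> = qbinom p m N * u ^ (m * N) * (qbinom p m k * (-1) ^ k * p ^ (k choose 2) *
          (qbinom p N (N - k) * (-1) ^ (N - k) * p ^ ((N - k) choose 2) * (p ^ m) ^ (N - k)))"
            unfolding D E by (simp add: algebra_simps)
          finally show ?thesis .
        qed
      qed
      also have "\<dots> = qbinom p m N * u ^ (m * N) * (qbinom p (m + N) N * (-1) ^ N * p ^ (N choose 2))"
        by (simp add: sum_distrib_left[symmetric] vandermonde[OF hp])
      also have "\<dots> = L N" unfolding L_def by (rule lemG[OF hp True])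
      finally show ?thesis using cL True by simp
    qed
  qed
  show ?thesis unfolding LHS RHS pL[symmetric] pR[symmetric] eq ..
qed




lemma emb_add: "emb (a + b) = emb a + emb b" by (simp add: emb_def)
lemma emb_mult: "emb (a * b) = emb a * emb b" by (simp add: emb_def)
lemma emb_diff: "emb (a - b) = emb a - emb b" by (simp add: emb_def)
lemma emb_minus: "emb (- a) = - emb a" by (simp add: emb_def)
lemma emb_1: "emb 1 = 1" by (simp add: emb_def One_fract_def)
lemma emb_0: "emb 0 = 0" by (simp add: emb_def Zero_fract_def)
lemma emb_power: "emb (a ^ k) = emb a ^ k"
  by (induction k) (simp_all add: emb_1 emb_mult)
lemma emb_eq_iff: "emb a = emb b \<longleftrightarrow> a = b" by (simp add: emb_def eq_fract)
lemma emb_eq0: "emb a = 0 \<longleftrightarrow> a = 0" using emb_eq_iff[of a 0] by (simp add: emb_0)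

lemmas emb_simps = emb_add emb_mult emb_diff emb_minus emb_1 emb_0 emb_power

section \<open>integral elements and congruence\<close>

definition intg :: "mpoly3 \<Rightarrow> rfun3 \<Rightarrow> bool" where
  "intg P F \<longleftrightarrow> (\<exists>C D. D \<noteq> 0 \<and> coprime D P \<and> F = emb C / emb D)"

lemma intg_emb: "intg P (emb c)"
  unfolding intg_def by (rule exI[of _ c], rule exI[of _ 1]) (simp add: emb_1)

lemma intg_inv: "D \<noteq> 0 \<Longrightarrow> coprime D P \<Longrightarrow> intg P (inverse (emb D))"
  unfolding intg_def by (rule exI[of _ 1], rule exI[of _ D]) (simp add: emb_1 divide_inverse)

lemma intg_add: "intg P F \<Longrightarrow> intg P G \<Longrightarrow> intg P (F + G)"
proof -
  assume "intg P F" "intg P G"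
  then obtain C1 D1 C2 D2 where h: "D1 \<noteq> 0" "coprime D1 P" "F = emb C1 / emb D1"
    "D2 \<noteq> 0" "coprime D2 P" "G = emb C2 / emb D2" unfolding intg_def by blast
  have "F + G = emb (C1 * D2 + C2 * D1) / emb (D1 * D2)"
    using h emb_eq0[of D1] emb_eq0[of D2] by (simp add: emb_simps field_simps)
  then show ?thesis unfolding intg_def using h by (intro exI[of _ "C1 * D2 + C2 * D1"] exI[of _ "D1 * D2"]) auto
qed

lemma intg_mult: "intg P F \<Longrightarrow> intg P G \<Longrightarrow> intg P (F * G)"
proof -
  assume "intg P F" "intg P G"
  then obtain C1 D1 C2 D2 where h: "D1 \<noteq> 0" "coprime D1 P" "F = emb C1 / emb D1"
    "D2 \<noteq> 0" "coprime D2 P" "G = emb C2 / emb D2" unfolding intg_def by blast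
  have "F * G = emb (C1 * C2) / emb (D1 * D2)"
    using h by (simp add: emb_simps)
  then show ?thesis unfolding intg_def using h by (intro exI[of _ "C1 * C2"] exI[of _ "D1 * D2"]) auto
qed

lemma intg_minus: "intg P F \<Longrightarrow> intg P (- F)"
proof -
  assume "intg P F"
  then obtain C D where h: "D \<noteq> 0" "coprime D P" "F = emb C / emb D" unfolding intg_def by blast
  then have "- F = emb (- C) / emb D" by (simp add: emb_minus)
  then show ?thesis unfolding intg_def using h by blast
qed

lemma intg_diff: "intg P F \<Longrightarrow> intg P G \<Longrightarrow> intg P (F - G)"
  using intg_add[of P F "- G"] intg_minus[of P G] by simp

lemma intg_1: "intg P 1" using intg_emb[of P 1] by (simp add: emb_1)

lemma intg_power: "intg P F \<Longrightarrow> intg P (F ^ k)"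
  by (induction k) (simp_all add: intg_1 intg_mult)

lemma intg_prod: "(\<And>i. i \<in> S \<Longrightarrow> intg P (f i)) \<Longrightarrow> intg P (\<Prod>i\<in>S. f i)"
  by (induction S rule: infinite_finite_induct) (simp_all add: intg_1 intg_mult)

definition cng :: "mpoly3 \<Rightarrow> rfun3 \<Rightarrow> rfun3 \<Rightarrow> bool" where
  "cng P F G \<longleftrightarrow> (\<exists>I. intg P I \<and> F - G = emb P * I)"

lemma cng_refl: "cng P F F"
  unfolding cng_def using intg_emb[of P 0] by (auto simp: emb_0)

lemma cng_add: "cng P F F' \<Longrightarrow> cng P G G' \<Longrightarrow> cng P (F + G) (F' + G')"
  unfolding cng_def
proof -
  assume "\<exists>I. intg P I \<and> F - F' = emb P * I" "\<exists>I. intg P I \<and> G - G' = emb P * I"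
  then obtain I J where IJ: "intg P I" "F - F' = emb P * I" "intg P J" "G - G' = emb P * J" by blast
  have "F + G - (F' + G') = emb P * (I + J)"
    using IJ(2,4) by (simp add: algebra_simps)
  then show "\<exists>I. intg P I \<and> F + G - (F' + G') = emb P * I" using IJ intg_add by blast
qed

lemma cng_mult_right: "cng P F F' \<Longrightarrow> intg P G \<Longrightarrow> cng P (F * G) (F' * G)"
  unfolding cng_def
proof -
  assume "\<exists>I. intg P I \<and> F - F' = emb P * I" "intg P G"
  then obtain I where "intg P I" "F - F' = emb P * I" by blast
  then have "intg P (I * G)" "F * G - F' * G = emb P * (I * G)"
    using \<open>intg P G\<close> by (auto simp: intg_mult algebra_simps left_diff_distrib[symmetric])
  then show "\<exists>I. intg P I \<and> F * G - F' * G = emb P * I" by blast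
qed

lemma cng_mult: "cng P F F' \<Longrightarrow> cng P G G' \<Longrightarrow> intg P F \<Longrightarrow> intg P G' \<Longrightarrow> cng P (F * G) (F' * G')"
  unfolding cng_def
proof -
  assume "\<exists>I. intg P I \<and> F - F' = emb P * I" "\<exists>I. intg P I \<and> G - G' = emb P * I"
     "intg P F" "intg P G'"
  then obtain I J where IJ: "intg P I" "F - F' = emb P * I" "intg P J" "G - G' = emb P * J" by blast
  have "F * G - F' * G' = F * (G - G') + (F - F') * G'" by (simp add: algebra_simps)
  also have "\<dots> = emb P * (F * J + I * G')" unfolding IJ by (simp add: algebra_simps)
  finally show "\<exists>I. intg P I \<and> F * G - F' * G' = emb P * I"
    using IJ \<open>intg P F\<close> \<open>intg P G'\<close> by (intro exI[of _ "F * J + I * G'"]) (simp add: intg_add intg_mult)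
qed

lemma cng_prod:
  "(\<And>i. i \<in> S \<Longrightarrow> cng P (f i) (g i) \<and> intg P (f i) \<and> intg P (g i))
   \<Longrightarrow> cng P (\<Prod>i\<in>S. f i) (\<Prod>i\<in>S. g i)"
proof (induction S rule: infinite_finite_induct)
  case (insert x F)
  then show ?case by (simp add: cng_mult intg_prod)
qed (simp_all add: cng_refl)

lemma cng_sum:
  "(\<And>i. i \<in> S \<Longrightarrow> cng P (f i) (g i)) \<Longrightarrow> cng P (\<Sum>i\<in>S. f i) (\<Sum>i\<in>S. g i)"
proof (induction S rule: infinite_finite_induct)
  case (insert x F)
  then show ?case by (simp add: cng_add)
qed (simp_all add: cng_refl)

lemma rcong_of_cng: "cng P F G \<Longrightarrow> rcong F G P"
  unfolding cng_def intg_def rcong_def by (auto simp: times_divide_eq_right) blast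




lemma const_power: "[:c:] ^ n = [:c ^ n:]" for c :: "'a::comm_semiring_1"
  by (induction n) (simp_all add: one_pCons mult.commute)

lemma X_power: "[:0, 1:] ^ n = (monom 1 n :: 'a::comm_semiring_1 poly)"
proof -
  have h: "[:0, 1:] = (monom 1 1 :: 'a poly)" by (simp add: monom_Suc monom_0)
  show ?thesis by (subst h) (simp add: monom_power)
qed

lemma var_a_pow: "var_a ^ j = [:[:monom 1 j:]:]"
  unfolding var_a_def by (simp add: const_power X_power)

lemma var_q_pow: "var_q ^ j = [:monom 1 j:]"
  unfolding var_q_def by (simp add: const_power X_power)

lemma diff_dvd_pow_diff: "(x - y) dvd (x ^ k - y ^ (k::nat))" for x y :: "'a::comm_ring_1"
proof (induction k)
  case (Suc k)
  have "x ^ Suc k - y ^ Suc k = x * (x ^ k - y ^ k) + (x - y) * y ^ k" by (simp add: algebra_simps)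
  then show ?case using Suc by (simp add: dvd_add dvd_mult)
qed simp

lemma deg0_of_dvd_const:
  fixes d :: "'a::idom poly"
  assumes "d dvd [:c:]" "c \<noteq> 0"
  shows "d = [:coeff d 0:]"
proof -
  have "degree d = 0" using dvd_imp_degree_le[OF assms(1)] assms(2) by simp
  then show ?thesis by (rule degree_eq_zeroE) simp
qed

lemma key_unit:
  fixes d g :: mpoly3
  assumes dc: "d dvd [:[:c:]:]" and c0: "c \<noteq> 0" and dg: "d dvd g"
    and u: "is_unit (coeff (coeff g 0) i)"
  shows "is_unit d"
proof -
  have d1: "d = [:coeff d 0:]" using deg0_of_dvd_const[OF dc] c0 by simp
  define d1 where "d1 = coeff d 0"
  have "d1 dvd [:c:]" using dc d1 unfolding d1_def by (metis const_poly_dvd_const_poly_iff)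
  then have d2: "d1 = [:coeff d1 0:]" using deg0_of_dvd_const c0 by blast
  define d2 where "d2 = coeff d1 0"
  have "[:d1:] dvd g" using dg d1 d1_def by simp
  then have "d1 dvd coeff g 0" by (simp add: const_poly_dvd_iff)
  then have "[:d2:] dvd coeff g 0" using d2 d2_def by simp
  then have "d2 dvd coeff (coeff g 0) i" by (simp add: const_poly_dvd_iff)
  then have "is_unit d2" using u dvd_trans by blast
  then have "is_unit d1" using d2 d2_def by (metis is_unit_const_poly_iff)
  then show ?thesis using d1 d1_def by (metis is_unit_const_poly_iff)
qed

definition P1 :: "nat \<Rightarrow> mpoly3" where "P1 n = 1 - var_a * var_q ^ n"
definition P2 :: "nat \<Rightarrow> mpoly3" where "P2 n = var_a - var_q ^ n"

lemma P1_coeff: "n > 0 \<Longrightarrow> coeff (coeff (P1 n) 0) 0 = 1"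
  unfolding P1_def var_q_pow by (simp add: var_a_def coeff_mult_0)

lemma P2_coeff: "n > 0 \<Longrightarrow> coeff (coeff (P2 n) 0) n = -1"
  unfolding P2_def var_q_pow by (cases n) (simp_all add: var_a_def)

lemma unit_1: "is_unit (1::rat poly)" by simp
lemma unit_m1: "is_unit (-1::rat poly)" by simp

lemma var_a_const: "var_a = [:[:[:0, 1:]:]:]" by (simp add: var_a_def)

lemma cop_a1: "n > 0 \<Longrightarrow> coprime var_a (P1 n)"
proof (rule coprimeI)
  fix d assume n: "n > 0" and h: "d dvd var_a" "d dvd P1 n"
  show "is_unit d"
    by (rule key_unit[where c="[:0,1:]" and g="P1 n" and i=0]) (use h n in \<open>auto simp: var_a_def P1_coeff\<close>)
qed

lemma cop_a2: "n > 0 \<Longrightarrow> coprime var_a (P2 n)"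
proof (rule coprimeI)
  fix d assume n: "n > 0" and h: "d dvd var_a" "d dvd P2 n"
  show "is_unit d"
    by (rule key_unit[where c="[:0,1:]" and g="P2 n" and i=n]) (use h n in \<open>auto simp: var_a_def P2_coeff\<close>)
qed

lemma cop_q1: "n > 0 \<Longrightarrow> coprime var_q (P1 n)"
proof (rule coprimeI)
  fix d assume n: "n > 0" and h: "d dvd var_q" "d dvd P1 n"
  have "d dvd var_q ^ n" using h(1) n by (simp add: dvd_power_le[of _ _ 1] dvd_trans)
  then have "d dvd var_a * var_q ^ n" by (simp add: dvd_mult)
  then have "d dvd P1 n + var_a * var_q ^ n" using h(2) by (simp add: dvd_add)
  then show "is_unit d" by (simp add: P1_def)
qed

lemma cop_q2: "n > 0 \<Longrightarrow> coprime var_q (P2 n)"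
proof (rule coprimeI)
  fix d assume n: "n > 0" and h: "d dvd var_q" "d dvd P2 n"
  have "d dvd var_q ^ n" using h(1) n by (simp add: dvd_power_le[of _ _ 1] dvd_trans)
  then have "d dvd P2 n + var_q ^ n" using h(2) by (simp add: dvd_add)
  then have "d dvd var_a" by (simp add: P2_def)
  then have "d dvd [:[:[:0,1:]:]:]" by (simp add: var_a_def)
  then show "is_unit d" 
    by (rule key_unit[where c="[:0,1:]" and g=var_q and i=1]) (use h(1) in \<open>auto simp: var_q_def\<close>)
qed

lemma one_minus_a_pow: "1 - var_a ^ j = [:[:1 - monom 1 j:]:]"
  by (simp add: var_a_pow one_pCons)

lemma monom_ne1: "j > 0 \<Longrightarrow> 1 - monom (1::rat) j \<noteq> 0"
  using monom_eq_1_iff[of "1::rat" j] by auto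

lemma cop_qj2: "n > 0 \<Longrightarrow> j > 0 \<Longrightarrow> coprime (1 - var_q ^ j) (P2 n)"
proof (rule coprimeI)
  fix d assume n: "n > 0" and j: "j > 0" and h: "d dvd 1 - var_q ^ j" "d dvd P2 n"
  have "d dvd 1 ^ n - (var_q ^ j) ^ n" using h(1) diff_dvd_pow_diff dvd_trans by blast
  moreover have "d dvd var_a ^ j - (var_q ^ n) ^ j"
    using h(2) diff_dvd_pow_diff[of var_a "var_q ^ n" j] dvd_trans unfolding P2_def by blast
  ultimately have "d dvd (1 ^ n - (var_q ^ j) ^ n) - (var_a ^ j - (var_q ^ n) ^ j)" by (rule dvd_diff)
  also have "(1 ^ n - (var_q ^ j) ^ n) - (var_a ^ j - (var_q ^ n) ^ j) = 1 - var_a ^ j"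
    by (simp add: power_mult[symmetric] mult.commute)
  finally have "d dvd [:[:1 - monom 1 j:]:]" unfolding one_minus_a_pow .
  then show "is_unit d"
    by (rule key_unit[where g="P2 n" and i=n]) (use h(2) n j monom_ne1 in \<open>auto simp: P2_coeff\<close>)
qed

lemma cop_qj1: "n > 0 \<Longrightarrow> j > 0 \<Longrightarrow> coprime (1 - var_q ^ j) (P1 n)"
proof (rule coprimeI)
  fix d assume n: "n > 0" and j: "j > 0" and h: "d dvd 1 - var_q ^ j" "d dvd P1 n"
  have "d dvd 1 ^ n - (var_q ^ j) ^ n" using h(1) diff_dvd_pow_diff dvd_trans by blast
  then have "d dvd var_a ^ j * (1 ^ n - (var_q ^ j) ^ n)" by (rule dvd_mult)
  moreover have "d dvd 1 ^ j - (var_a * var_q ^ n) ^ j"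
    using h(2) diff_dvd_pow_diff[of 1 "var_a * var_q ^ n" j] dvd_trans unfolding P1_def by blast
  ultimately have "d dvd (1 ^ j - (var_a * var_q ^ n) ^ j) - var_a ^ j * (1 ^ n - (var_q ^ j) ^ n)"
    by (rule dvd_diff[rotated])
  also have "(1 ^ j - (var_a * var_q ^ n) ^ j) - var_a ^ j * (1 ^ n - (var_q ^ j) ^ n) = 1 - var_a ^ j"
    by (simp add: power_mult[symmetric] mult.commute power_mult_distrib algebra_simps)
  finally have "d dvd [:[:1 - monom 1 j:]:]" unfolding one_minus_a_pow .
  then show "is_unit d"
    by (rule key_unit[where g="P1 n" and i=0]) (use h(2) n j monom_ne1 in \<open>auto simp: P1_coeff\<close>)
qed




lemma emb_qpoch: "emb (qpoch y q k) = qpoch (emb y) (emb q) k"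
  by (induction k) (simp_all add: qpoch_Suc emb_simps)

lemma factor_id:
  fixes a b q t :: "'a::field"
  assumes "a \<noteq> 0" "b \<noteq> 0"
  shows "(1 - a * q * t) * (1 - q / a * t) - (1 - b * q * t) * (1 - q / b * t)
     = (1 - a * b) * (a - b) * (q * t * inverse a * inverse b)"
  using assms by (simp add: field_simps)

lemma qpoch_pair: "qpoch y q k * qpoch z q k = (\<Prod>i<k. (1 - y * q ^ i) * (1 - z * q ^ i))"
  by (simp add: qpoch_def prod.distrib)

theorem theorem4p1:
  fixes n :: nat
  assumes "odd n"
  shows "rcong
    (\<Sum>k<n. qpoch (A * Q) (Q ^ 2) k * qpoch (Q / A) (Q ^ 2) k
              / (qpoch (Q ^ 2) (Q ^ 2) k) ^ 2 * X ^ k)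
    (\<Sum>k\<le>(n - 1) div 2. (qbinom (Q ^ 2) ((n - 1) div 2) k) ^ 2
              * Q powi (int k ^ 2 - int n * int k) * (- X) ^ k
              * qpoch X (Q ^ 2) ((n - 1) div 2 - k))
    ((1 - var_a * var_q ^ n) * (var_a - var_q ^ n))"
proof -
  obtain m where nm: "n = 2 * m + 1" using assms oddE by blast
  have n0: "n > 0" using nm by simp
  have md: "(n - 1) div 2 = m" using nm by simp
  define P where "P = (1 - var_a * var_q ^ n) * (var_a - var_q ^ n)"
  have PP: "P = P1 n * P2 n" by (simp add: P_def P1_def P2_def)
  have copA: "coprime var_a P" using cop_a1[OF n0] cop_a2[OF n0] by (simp add: PP)
  have copQ: "coprime var_q P" using cop_q1[OF n0] cop_q2[OF n0] by (simp add: PP)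
  have copF: "coprime (qpoch (var_q ^ 2) (var_q ^ 2) k) P" for k
    unfolding qpoch_def
  proof (rule prod_coprime_left)
    fix i
    have e: "var_q ^ 2 * (var_q ^ 2) ^ i = var_q ^ (2 + 2 * i)" by (simp add: power_add power_mult power2_eq_square)
    show "coprime (1 - var_q ^ 2 * (var_q ^ 2) ^ i) P"
      unfolding e using cop_qj1[OF n0, of "2 + 2 * i"] cop_qj2[OF n0, of "2 + 2 * i"] by (simp add: PP)
  qed
  have va0: "var_a \<noteq> 0" by (simp add: var_a_def)
  have vq0: "var_q \<noteq> 0" by (simp add: var_q_def)
  have A0: "A \<noteq> 0" using va0 by (simp add: A_def emb_eq0)
  have Q0: "Q \<noteq> 0" using vq0 by (simp add: Q_def emb_eq0)
  have hq: "(Q ^ 2) ^ i \<noteq> 1" if i: "0 < i" for i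
  proof
    assume "(Q ^ 2) ^ i = 1"
    then have "emb (var_q ^ (2 * i)) = emb 1" by (simp add: Q_def emb_simps power_mult)
    then have "var_q ^ (2 * i) = 1" unfolding emb_eq_iff .
    then have "coeff (var_q ^ (2 * i)) 0 = coeff (1::mpoly3) 0" by simp
    then have "monom (1::rat poly) (2 * i) = 1" unfolding var_q_pow by simp
    then show False using i monom_eq_1_iff[of "1::rat poly" "2 * i"] by simp
  qed
  have intgA: "intg P (inverse A)" unfolding A_def by (rule intg_inv[OF va0 copA])
  have intgQ: "intg P (inverse Q)" unfolding Q_def by (rule intg_inv[OF vq0 copQ])
  have intgAe: "intg P A" "intg P Q" "intg P X" unfolding A_def Q_def X_def by (simp_all add: intg_emb)
  have Fe: "qpoch (Q ^ 2) (Q ^ 2) k = emb (qpoch (var_q ^ 2) (var_q ^ 2) k)" for k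
    by (simp add: emb_qpoch emb_simps Q_def)
  have intgF: "intg P (inverse (qpoch (Q ^ 2) (Q ^ 2) k))" for k
  proof -
    have "qpoch (Q ^ 2) (Q ^ 2) k \<noteq> 0" using qfact_nz[of "Q ^ 2"] hq by blast
    then have "qpoch (var_q ^ 2) (var_q ^ 2) k \<noteq> 0" unfolding Fe by (auto simp: emb_0)
    then show ?thesis unfolding Fe by (rule intg_inv[OF _ copF])
  qed
  have embP: "emb P = (1 - A * Q ^ n) * (A - Q ^ n)"
    by (simp add: P_def emb_simps A_def Q_def)
  define fA where "fA i = (1 - A * Q * (Q ^ 2) ^ i) * (1 - Q / A * (Q ^ 2) ^ i)" for i
  define fB where "fB i = (1 - Q ^ n * Q * (Q ^ 2) ^ i) * (1 - Q / Q ^ n * (Q ^ 2) ^ i)" for i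
  have fac: "cng P (fA i) (fB i) \<and> intg P (fA i) \<and> intg P (fB i)" for i
  proof (intro conjI)
    have Qn0: "Q ^ n \<noteq> 0" using Q0 by simp
    have "fA i - fB i = emb P * (Q * (Q ^ 2) ^ i * inverse A * inverse Q ^ n)"
      unfolding fA_def fB_def embP factor_id[OF A0 Qn0] by (simp add: power_inverse)
    moreover have "intg P (Q * (Q ^ 2) ^ i * inverse A * inverse Q ^ n)"
      using intgA intgQ intgAe by (simp add: intg_mult intg_power)
    ultimately show "cng P (fA i) (fB i)" unfolding cng_def by blast
    have d: "Q / A = Q * inverse A" "Q / Q ^ n = Q * inverse Q ^ n" by (simp_all add: divide_inverse power_inverse)
    show "intg P (fA i)" unfolding fA_def d
      using intgA intgQ intgAe intg_1 by (simp add: intg_mult intg_power intg_diff)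
    show "intg P (fB i)" unfolding fB_def d
      using intgA intgQ intgAe intg_1 by (simp add: intg_mult intg_power intg_diff)
  qed
  have trm: "cng P (qpoch (A * Q) (Q ^ 2) k * qpoch (Q / A) (Q ^ 2) k
              / (qpoch (Q ^ 2) (Q ^ 2) k) ^ 2 * X ^ k)
        (qpoch (Q ^ n * Q) (Q ^ 2) k * qpoch (Q / Q ^ n) (Q ^ 2) k
              / (qpoch (Q ^ 2) (Q ^ 2) k) ^ 2 * X ^ k)" for k
  proof -
    have pA: "qpoch (A * Q) (Q ^ 2) k * qpoch (Q / A) (Q ^ 2) k = (\<Prod>i<k. fA i)"
      unfolding qpoch_pair fA_def ..
    have pB: "qpoch (Q ^ n * Q) (Q ^ 2) k * qpoch (Q / Q ^ n) (Q ^ 2) k = (\<Prod>i<k. fB i)"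
      unfolding qpoch_pair fB_def ..
    have r: "\<And>T. T / (qpoch (Q ^ 2) (Q ^ 2) k) ^ 2 * X ^ k = T * (inverse (qpoch (Q ^ 2) (Q ^ 2) k) ^ 2 * X ^ k)"
      by (simp add: divide_inverse power_inverse)
    have "cng P (\<Prod>i<k. fA i) (\<Prod>i<k. fB i)" by (rule cng_prod) (use fac in blast)
    moreover have "intg P (inverse (qpoch (Q ^ 2) (Q ^ 2) k) ^ 2 * X ^ k)"
      using intgF intgAe by (simp add: intg_mult intg_power)
    ultimately show ?thesis unfolding pA pB r by (rule cng_mult_right)
  qed
  have "cng P (\<Sum>k<n. qpoch (A * Q) (Q ^ 2) k * qpoch (Q / A) (Q ^ 2) k
              / (qpoch (Q ^ 2) (Q ^ 2) k) ^ 2 * X ^ k)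
        (\<Sum>k<n. qpoch (Q ^ n * Q) (Q ^ 2) k * qpoch (Q / Q ^ n) (Q ^ 2) k
              / (qpoch (Q ^ 2) (Q ^ 2) k) ^ 2 * X ^ k)"
    by (rule cng_sum) (rule trm)
  also have "(\<Sum>k<n. qpoch (Q ^ n * Q) (Q ^ 2) k * qpoch (Q / Q ^ n) (Q ^ 2) k
              / (qpoch (Q ^ 2) (Q ^ 2) k) ^ 2 * X ^ k)
      = (\<Sum>k\<le>(n - 1) div 2. (qbinom (Q ^ 2) ((n - 1) div 2) k) ^ 2
              * Q powi (int k ^ 2 - int n * int k) * (- X) ^ k
              * qpoch X (Q ^ 2) ((n - 1) div 2 - k))"
    unfolding md by (rule field_id[OF Q0 hq nm]) 
  finally show ?thesis unfolding P_def by (rule rcong_of_cng)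
qed


end
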